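(* Consider a federated learning system with $m$ clients, a hypothesis space $\mathcal{W}$, a loss function $\ell:\mathcal{W}\times\mathcal{Z}\to\mathbb{R}$, scheduled collection times $\mathcal{T}_{\mathrm{c}}=\{t_{\mathrm{c},i}\}_{i\in[m]}$ with $t_{\mathrm{c},i}\in\{1,\dots,t_{\mathrm{agg}}\}$, and privacy levels $\mathcal{E}_{\mathrm{c}}=\{\epsilon_{\mathrm{c},i}\}_{i\in[m]}$, $\epsilon_{\mathrm{c},i}\ge 0$. Let $$\tilde{W}(\mathcal{T}_{\mathrm{c}},\mathcal{E}_{\mathrm{c}})=W(\mathcal{T}_{\mathrm{c}},\mathcal{E}_{\mathrm{c}})+N:=\frac{1}{m}\sum_{i=1}^m\bigl(W_i^{(t_{\mathrm{c},i})}+N_i\bigr),$$ where $W_i^{(t_{\mathrm{c},i})}$ is the local model trained by client $i$ on its dataset collected at time $t_{\mathrm{c},i}$ and $N_i$ is the Laplace noise random variable added by client $i$ to satisfy $\epsilon_{\mathrm{c},i}$-DP, $i\in[m]$. Assume that the hypothesis $W=\frac{1}{m}\sum_{i=1}^m W_i^{(t_{\mathrm{c},i})}\in\mathcal{W}$ is distributed according to $P_W$ induced by some algorithm, and that for each $i\in[m]$ the cumulant generating function of the random variable $\ell(W+N,Z_i^{(t_{\mathrm{agg}})})-\mathbb{E}[\ell(W+N,Z_i^{(t_{\mathrm{agg}})})]$ under the product distribution $P_W\otimes P_N\otimes\mu_i$ is upper bounded by some function $\psi_i(\lambda)$ for $\lambda$ in an interval $(b_{i,-},b_{i,+})$ with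 $b_{i,-}<0<b_{i,+}$. Then $$\mathbb{E}\Bigl[\hat{\mathsf{L}}\bigl(\tilde{W}(\mathcal{T}_{\mathrm{c}},\mathcal{E}_{\mathrm{c}}),\mathcal{D}^{(t_{\mathrm{agg}})}\bigr)-\hat{\mathsf{L}}(w^\ast,\mathcal{D}^{(t_{\mathrm{agg}})})\Bigr]\le\sum_{i=1}^m p_i\frac{1}{|\mathcal{D}_i|}\sum_{j=1}^{|\mathcal{D}_i|}\psi_{i,+}^{*-1}\Bigl(I\bigl(W;Z_{i,j}^{(t_{\mathrm{agg}})}\bigr)\Bigr)+\bar{\mathsf{L}}(w^\ast)-\mathbb{E}_{\mathcal{D}^{(t_{\mathrm{agg}})}}\bigl[\hat{\mathsf{L}}(w^\ast,\mathcal{D}^{(t_{\mathrm{agg}})})\bigr]+\mathbb{E}\bigl[\mathsf{R}(\tilde{W}(\mathcal{T}_{\mathrm{c}},\mathcal{E}_{\mathrm{c}}))\bigr],$$ where $$\psi_{i,+}^{*-1}(x):=\inf_{\lambda\in[0,b_{i,+}]}\frac{x+\psi_i(\lambda)}{\lambda},\qquad \mathsf{R}(w):=\bar{\mathsf{L}}(w)-\bar{\mathsf{L}}(w^\ast),$$ and the expectation is taken over the distribution $P_{W,N,\mathcal{D}_i^{(t_{\mathrm{agg}})}}$, $i\in[m]$. Furthermore, if $W+N\in\mathcal{W}$ for every $W\in\mathcal{W}$, then $$\mathbb{E}\bigl[\mathsf{R}(\tilde{W}(\mathcal{T}_{\mathrm{c}},\mathcal{E}_{\mathrm{c}}))\b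igr]\le\sup_{w\in\mathcal{W}}\bar{\mathsf{L}}(w)-\bar{\mathsf{L}}(w^\ast).$$
   Context: Setting: for each client $i\in[m]$ the data evolve as a discrete-time stationary (Markov) process; $\mathcal{D}_i^{(t)}=\{Z_{i,1}^{(t)},\dots,Z_{i,|\mathcal{D}_i|}^{(t)}\}$ denotes client $i$'s dataset collected at time $t$, whose size $|\mathcal{D}_i|$ does not depend on $t$ (so $|\mathcal{D}_i|=|\mathcal{D}_i^{(t_{\mathrm{c},i})}|=|\mathcal{D}_i^{(t_{\mathrm{agg}})}|$). $\mathcal{D}^{(t)}$ denotes the collection of all clients' datasets at time $t$. The weights are $p_i=|\mathcal{D}_i|/|\mathcal{D}|$ with $|\mathcal{D}|=\sum_{i=1}^m|\mathcal{D}_i|$. Each data point $Z_{i,j}^{(t_{\mathrm{agg}})}$ (written generically $Z_i^{(t_{\mathrm{agg}})}$) has distribution $\mu_i$, the target distribution of client $i$. The empirical loss of client $i$ for $w\in\mathcal{W}$ on a dataset $\mathcal{D}_i=\{Z_{i,1},\dots,Z_{i,|\mathcal{D}_i|}\}$ is $\hat{\mathsf{L}}_i(w,\mathcal{D}_i)=\frac{1}{|\mathcal{D}_i|}\sum_{j=1}^{|\mathcal{D}_i|}\ell(w,Z_{i,j})$, and the global empirical loss is $\hat{\mathsf{L}}(w,\mathcal{D}^{(t)})=\sum_{i=1}^m p_i\hat{\mathsf{L}}_i(w,\mathcal{D}_i^{(t)})$. The ideal (non-private, freshest-data) ERM model is $w^\ast=\arg\min_w\hat{\mathsf{L}}(w,\mathcal{D}^{(t_{\mathrm{agg}})})$.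 The population risk of client $i$ is $\mathsf{L}_{\mu_i}(w)=\mathbb{E}_{Z_i\sim\mu_i}[\ell(w,Z_i)]$ and the average population loss is $\bar{\mathsf{L}}(w)=\sum_{i=1}^m p_i\mathsf{L}_{\mu_i}(w)$. $I(\cdot\,;\cdot)$ denotes mutual information. A randomized mechanism $M$ is $\epsilon_{\mathrm{c}}$-DP if for all datasets $\mathcal{D},\mathcal{D}'$ differing in one data point and all measurable $\mathcal{S}$, $\Pr[M(\mathcal{D})\in\mathcal{S}]\le e^{\epsilon_{\mathrm{c}}}\Pr[M(\mathcal{D}')\in\mathcal{S}]$. *)

theory Defs
  imports "HOL-Probability.Probability"
begin

definition client_weight :: "nat \<Rightarrow> (nat \<Rightarrow> nat) \<Rightarrow> nat \<Rightarrow> real" where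
  "client_weight m n i = real (n i) / (\<Sum>k<m. real (n k))"

definition local_emp_loss :: "('w \<Rightarrow> 'z \<Rightarrow> real) \<Rightarrow> nat \<Rightarrow> (nat \<Rightarrow> 'z) \<Rightarrow> 'w \<Rightarrow> real" where
  "local_emp_loss loss n D w = (1 / real n) * (\<Sum>j<n. loss w (D j))"

definition global_emp_loss ::
  "('w \<Rightarrow> 'z \<Rightarrow> real) \<Rightarrow> nat \<Rightarrow> (nat \<Rightarrow> nat) \<Rightarrow> (nat \<Rightarrow> nat \<Rightarrow> 'z) \<Rightarrow> 'w \<Rightarrow> real" where
  "global_emp_loss loss m n D w = (\<Sum>i<m. client_weight m n i * local_emp_loss loss (n i) (D i) w)"

definition pop_risk :: "('w \<Rightarrow> 'z \<Rightarrow> real) \<Rightarrow> 'z measure \<Rightarrow> 'w \<Rightarrow> real" where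
  "pop_risk loss \<mu> w = (\<integral>z. loss w z \<partial>\<mu>)"

definition avg_pop_loss ::
  "('w \<Rightarrow> 'z \<Rightarrow> real) \<Rightarrow> nat \<Rightarrow> (nat \<Rightarrow> nat) \<Rightarrow> (nat \<Rightarrow> 'z measure) \<Rightarrow> 'w \<Rightarrow> real" where
  "avg_pop_loss loss m n \<mu> w = (\<Sum>i<m. client_weight m n i * pop_risk loss (\<mu> i) w)"

definition cgf :: "'a measure \<Rightarrow> ('a \<Rightarrow> real) \<Rightarrow> real \<Rightarrow> real" where
  "cgf P f lam = ln (\<integral>x. exp (lam * f x) \<partial>P)"

definition psi_star_inv :: "(real \<Rightarrow> real) \<Rightarrow> ereal \<Rightarrow> real \<Rightarrow> real" where
  "psi_star_inv \<psi> bplus x = (INF lam\<in>{lam. 0 < lam \<and> ereal lam < bplus}. (x + \<psi> lam) / lam)"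

definition laplace_vec_density :: "real \<Rightarrow> 'a::euclidean_space \<Rightarrow> real" where
  "laplace_vec_density s x = (\<Prod>b\<in>Basis. exp (- \<bar>x \<bullet> b\<bar> / s) / (2 * s))"

end

theory Submission
  imports Defs
begin

lemma indep_distr:
  fixes M :: "'o measure" and X :: "'o \<Rightarrow> 'x" and Y :: "'o \<Rightarrow> 'y"
  assumes PM: "prob_space M"
    and X[measurable]: "X \<in> measurable M S" and Y[measurable]: "Y \<in> measurable M T"
    and ind: "prob_space.indep_set M B A"
    and XA: "\<And>C. C \<in> sets S \<Longrightarrow> X -` C \<inter> space M \<in> A"
    and YB: "\<And>C. C \<in> sets T \<Longrightarrow> Y -` C \<inter> space M \<in> B"
  shows "distr M S X \<Otimes>\<^sub>M distr M T Y = distr M (S \<Otimes>\<^sub>M T) (\<lambda>x. (X x, Y x))"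
proof -
  interpret prob_space M by (rule PM)
  interpret PX: prob_space "distr M S X" by (rule prob_space_distr) simp
  interpret PY: prob_space "distr M T Y" by (rule prob_space_distr) simp
  have prodp: "prob (a \<inter> b) = prob a * prob b" if "a \<in> A" "b \<in> B" for a b
    using ind that unfolding indep_sets2_eq by (auto simp: Int_commute mult.commute)
  show ?thesis
  proof (rule pair_measure_eqI)
    show "sigma_finite_measure (distr M S X)" ..
    show "sigma_finite_measure (distr M T Y)" ..
    show "sets (distr M S X \<Otimes>\<^sub>M distr M T Y) = sets (distr M (S \<Otimes>\<^sub>M T) (\<lambda>x. (X x, Y x)))"
      by simp
    fix C E assume C: "C \<in> sets (distr M S X)" and E: "E \<in> sets (distr M T Y)"
    have "emeasure (distr M (S \<Otimes>\<^sub>M T) (\<lambda>x. (X x, Y x))) (C \<times> E)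
        = emeasure M ((\<lambda>x. (X x, Y x)) -` (C \<times> E) \<inter> space M)"
      using C E by (intro emeasure_distr) auto
    also have "(\<lambda>x. (X x, Y x)) -` (C \<times> E) \<inter> space M = (X -` C \<inter> space M) \<inter> (Y -` E \<inter> space M)"
      by auto
    also have "emeasure M \<dots> = emeasure M (X -` C \<inter> space M) * emeasure M (Y -` E \<inter> space M)"
      using prodp[OF XA YB] C E
      by (simp add: emeasure_eq_measure measure_nonneg ennreal_mult)
    also have "\<dots> = emeasure (distr M S X) C * emeasure (distr M T Y) E"
      using C E by (simp add: emeasure_distr)
    finally show "emeasure (distr M S X) C * emeasure (distr M T Y) E
       = emeasure (distr M (S \<Otimes>\<^sub>M T) (\<lambda>x. (X x, Y x))) (C \<times> E)" by simp
  qed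
qed

lemma measurable_sigma_gen:
  assumes "G \<subseteq> Pow \<Omega>" "\<And>A. A \<in> sets S \<Longrightarrow> f -` A \<inter> \<Omega> \<in> G" "f \<in> \<Omega> \<rightarrow> space S"
  shows "f \<in> measurable (sigma \<Omega> G) S"
  using assms by (intro measurableI) (auto simp: space_measure_of_conv sets_measure_of intro: sigma_sets.Basic)

lemma DV_indep:
  fixes M :: "'o measure" and X :: "'o \<Rightarrow> 'x" and Y :: "'o \<Rightarrow> 'y" and V :: "'o \<Rightarrow> 'v"
    and g :: "('x \<times> 'v) \<times> 'y \<Rightarrow> real"
  assumes PM: "prob_space M"
    and X[measurable]: "X \<in> measurable M S" and Y[measurable]: "Y \<in> measurable M T"
    and V[measurable]: "V \<in> measurable M R"
    and ind: "distr M (S \<Otimes>\<^sub>M T) (\<lambda>\<omega>. (X \<omega>, Y \<omega>)) \<Otimes>\<^sub>M distr M R V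
       = distr M ((S \<Otimes>\<^sub>M T) \<Otimes>\<^sub>M R) (\<lambda>\<omega>. ((X \<omega>, Y \<omega>), V \<omega>))"
    and ac: "absolutely_continuous (distr M S X \<Otimes>\<^sub>M distr M T Y) (distr M (S \<Otimes>\<^sub>M T) (\<lambda>\<omega>. (X \<omega>, Y \<omega>)))"
    and ent: "integrable (distr M (S \<Otimes>\<^sub>M T) (\<lambda>\<omega>. (X \<omega>, Y \<omega>)))
       (entropy_density (exp 1) (distr M S X \<Otimes>\<^sub>M distr M T Y) (distr M (S \<Otimes>\<^sub>M T) (\<lambda>\<omega>. (X \<omega>, Y \<omega>))))"
    and g[measurable]: "g \<in> borel_measurable ((S \<Otimes>\<^sub>M R) \<Otimes>\<^sub>M T)"
    and gi: "integrable M (\<lambda>\<omega>. g ((X \<omega>, V \<omega>), Y \<omega>))"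
    and ei: "integrable ((distr M S X \<Otimes>\<^sub>M distr M R V) \<Otimes>\<^sub>M distr M T Y) (\<lambda>p. exp (g p))"
  shows "(\<integral>\<omega>. g ((X \<omega>, V \<omega>), Y \<omega>) \<partial>M) \<le> prob_space.mutual_information M (exp 1) S T X Y
      + ln (\<integral>p. exp (g p) \<partial>((distr M S X \<Otimes>\<^sub>M distr M R V) \<Otimes>\<^sub>M distr M T Y))"
proof -
  interpret prob_space M by (rule PM)
  define PX where "PX = distr M S X"
  define PY where "PY = distr M T Y"
  define PN where "PN = distr M R V"
  define Q where "Q = PX \<Otimes>\<^sub>M PY"
  define J where "J = distr M (S \<Otimes>\<^sub>M T) (\<lambda>\<omega>. (X \<omega>, Y \<omega>))"
  define P3 where "P3 = (PX \<Otimes>\<^sub>M PN) \<Otimes>\<^sub>M PY"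
  define Zc where "Zc = (\<integral>p. exp (g p) \<partial>P3)"
  interpret PX: prob_space PX unfolding PX_def by (rule prob_space_distr) simp
  interpret PY: prob_space PY unfolding PY_def by (rule prob_space_distr) simp
  interpret PN: prob_space PN unfolding PN_def by (rule prob_space_distr) simp
  interpret J: prob_space J unfolding J_def by (rule prob_space_distr) simp
  interpret Q: prob_space Q unfolding Q_def by (rule prob_space_pair) unfold_locales
  interpret P3: prob_space P3 unfolding P3_def by (intro prob_space_pair) unfold_locales
  interpret XY: pair_prob_space PX PY ..
  interpret YN: pair_prob_space PY PN ..
  interpret XN: pair_prob_space PX PN ..
  interpret XNY: pair_prob_space "PX \<Otimes>\<^sub>M PN" PY 
    by (intro pair_prob_space.intro prob_space_pair) unfold_locales
  interpret QN: pair_prob_space Q PN ..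
  interpret JN: pair_prob_space J PN ..
  have sPX: "sets PX = sets S" unfolding PX_def by simp
  have sPY: "sets PY = sets T" unfolding PY_def by simp
  have sPN: "sets PN = sets R" unfolding PN_def by simp
  have sQ: "sets Q = sets (S \<Otimes>\<^sub>M T)" unfolding Q_def
    by (intro sets_pair_measure_cong sPX sPY)
  have sJ: "sets J = sets (S \<Otimes>\<^sub>M T)" unfolding J_def by simp
  have sP3: "sets P3 = sets ((S \<Otimes>\<^sub>M R) \<Otimes>\<^sub>M T)" unfolding P3_def
    by (intro sets_pair_measure_cong sPX sPY sPN)
  have ac': "absolutely_continuous Q J" using ac unfolding Q_def J_def PX_def PY_def .
  define D where "D = RN_deriv Q J"
  have sJQ: "sets J = sets Q" by (rule trans[OF sJ sQ[symmetric]])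
  have DQ: "D \<in> borel_measurable Q" unfolding D_def by (rule borel_measurable_RN_deriv)
  have D_meas[measurable]: "D \<in> borel_measurable (S \<Otimes>\<^sub>M T)"
    using DQ unfolding measurable_cong_sets[OF sQ refl] .
  have JD: "J = density Q D"
    unfolding D_def by (rule Q.density_RN_deriv[OF ac' sJQ, symmetric])
  have "AE x in Q. D x \<noteq> \<infinity>"
    unfolding D_def by (rule Q.RN_deriv_finite[OF J.sigma_finite_measure_axioms ac' sJQ])
  then have AE_fin: "AE x in J. D x \<noteq> \<infinity>"
    by (rule absolutely_continuous_AE[OF sJQ ac'])
  have "AE x in density Q D. 0 < D x" using DQ by (subst AE_density) auto
  then have AE_pos: "AE x in J. 0 < D x" unfolding JD .
  have AE_J: "AE x in J. 0 < D x \<and> D x \<noteq> \<infinity>" using AE_fin AE_pos by eventually_elim auto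
  have AE_M: "AE \<omega> in M. 0 < D (X \<omega>, Y \<omega>) \<and> D (X \<omega>, Y \<omega>) \<noteq> \<infinity>"
  proof -
    have "{x \<in> space (S \<Otimes>\<^sub>M T). 0 < D x \<and> D x \<noteq> \<infinity>} \<in> sets (S \<Otimes>\<^sub>M T)"
      by measurable
    then show ?thesis using AE_J unfolding J_def by (subst (asm) AE_distr_iff) auto
  qed
  define e where "e = (\<lambda>p::('x \<times> 'y) \<times> 'v. ennreal (exp (g ((fst (fst p), snd p), snd (fst p)))))"
  define h where "h = (\<lambda>p::('x \<times> 'y) \<times> 'v. e p / D (fst p))"
  have e_m[measurable]: "e \<in> borel_measurable ((S \<Otimes>\<^sub>M T) \<Otimes>\<^sub>M R)"
    unfolding e_def by measurable
  have h_m[measurable]: "h \<in> borel_measurable ((S \<Otimes>\<^sub>M T) \<Otimes>\<^sub>M R)"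
    unfolding h_def by measurable
  have sJN: "sets (J \<Otimes>\<^sub>M PN) = sets ((S \<Otimes>\<^sub>M T) \<Otimes>\<^sub>M R)"
    by (intro sets_pair_measure_cong sJ sPN)
  have sQN: "sets (Q \<Otimes>\<^sub>M PN) = sets ((S \<Otimes>\<^sub>M T) \<Otimes>\<^sub>M R)"
    by (intro sets_pair_measure_cong sQ sPN)
  have hJN: "h \<in> borel_measurable (J \<Otimes>\<^sub>M PN)"
    using h_m unfolding measurable_cong_sets[OF sJN refl] .
  have hQN: "h \<in> borel_measurable (Q \<Otimes>\<^sub>M PN)"
    using h_m unfolding measurable_cong_sets[OF sQN refl] .
  have eQN: "e \<in> borel_measurable (Q \<Otimes>\<^sub>M PN)"
    using e_m unfolding measurable_cong_sets[OF sQN refl] .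
  have ihQ: "(\<lambda>xy. \<integral>\<^sup>+ v. h (xy, v) \<partial>PN) \<in> borel_measurable Q"
    by (rule PN.borel_measurable_nn_integral_fst[OF hQN])
  have ieQ: "(\<lambda>xy. \<integral>\<^sup>+ v. e (xy, v) \<partial>PN) \<in> borel_measurable Q"
    by (rule PN.borel_measurable_nn_integral_fst[OF eQN])
  have step1: "(\<integral>\<^sup>+\<omega>. h ((X \<omega>, Y \<omega>), V \<omega>) \<partial>M) = (\<integral>\<^sup>+p. h p \<partial>(J \<Otimes>\<^sub>M PN))"
  proof -
    have "(\<integral>\<^sup>+p. h p \<partial>(J \<Otimes>\<^sub>M PN)) = (\<integral>\<^sup>+p. h p \<partial>(distr M ((S \<Otimes>\<^sub>M T) \<Otimes>\<^sub>M R) (\<lambda>\<omega>. ((X \<omega>, Y \<omega>), V \<omega>))))"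
      using ind unfolding J_def PN_def by simp
    also have "\<dots> = (\<integral>\<^sup>+\<omega>. h ((X \<omega>, Y \<omega>), V \<omega>) \<partial>M)"
      by (rule nn_integral_distr) simp_all
    finally show ?thesis by simp
  qed
  have step2: "(\<integral>\<^sup>+p. h p \<partial>(J \<Otimes>\<^sub>M PN)) = (\<integral>\<^sup>+xy. D xy * (\<integral>\<^sup>+ v. h (xy, v) \<partial>PN) \<partial>Q)"
  proof -
    have "(\<integral>\<^sup>+p. h p \<partial>(J \<Otimes>\<^sub>M PN)) = (\<integral>\<^sup>+xy. (\<integral>\<^sup>+ v. h (xy, v) \<partial>PN) \<partial>J)"
      by (rule PN.nn_integral_fst[OF hJN, symmetric])
    also have "\<dots> = (\<integral>\<^sup>+xy. D xy * (\<integral>\<^sup>+ v. h (xy, v) \<partial>PN) \<partial>Q)"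
      unfolding JD by (rule nn_integral_density[OF DQ ihQ])
    finally show ?thesis .
  qed
  have step3: "(\<integral>\<^sup>+xy. D xy * (\<integral>\<^sup>+ v. h (xy, v) \<partial>PN) \<partial>Q) \<le> (\<integral>\<^sup>+xy. (\<integral>\<^sup>+ v. e (xy, v) \<partial>PN) \<partial>Q)"
  proof (rule nn_integral_mono)
    fix xy assume xy: "xy \<in> space Q"
    have hm: "(\<lambda>v. h (xy, v)) \<in> borel_measurable PN"
      using hQN xy by (intro measurable_Pair2) 
    have "D xy * (\<integral>\<^sup>+ v. h (xy, v) \<partial>PN) = (\<integral>\<^sup>+ v. D xy * h (xy, v) \<partial>PN)"
      by (rule nn_integral_cmult[OF hm, symmetric])
    also have "\<dots> \<le> (\<integral>\<^sup>+ v. e (xy, v) \<partial>PN)"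
      unfolding h_def by (intro nn_integral_mono) (simp, metis divide_le_posI_ennreal ennreal_times_divide mult_eq_0_iff not_gr_zero order.refl zero_order(1))
    finally show "D xy * (\<integral>\<^sup>+ v. h (xy, v) \<partial>PN) \<le> (\<integral>\<^sup>+ v. e (xy, v) \<partial>PN)" .
  qed
  have spX: "space PX = space S" unfolding PX_def by simp
  have eg: "e ((x, y), v) = ennreal (exp (g ((x, v), y)))" for x y v unfolding e_def by simp
  have step4: "(\<integral>\<^sup>+xy. (\<integral>\<^sup>+ v. e (xy, v) \<partial>PN) \<partial>Q)
      = (\<integral>\<^sup>+x. \<integral>\<^sup>+y. \<integral>\<^sup>+ v. ennreal (exp (g ((x, v), y))) \<partial>PN \<partial>PY \<partial>PX)"
    using PY.nn_integral_fst[OF ieQ[unfolded Q_def]] unfolding Q_def by (simp add: eg)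
  have step5: "(\<integral>\<^sup>+x. \<integral>\<^sup>+y. \<integral>\<^sup>+ v. ennreal (exp (g ((x, v), y))) \<partial>PN \<partial>PY \<partial>PX)
      = (\<integral>\<^sup>+x. \<integral>\<^sup>+v. \<integral>\<^sup>+ y. ennreal (exp (g ((x, v), y))) \<partial>PY \<partial>PN \<partial>PX)"
  proof (rule nn_integral_cong)
    fix x assume x: "x \<in> space PX"
    then have xS: "x \<in> space S" using spX by simp
    have m1: "(\<lambda>p. ennreal (exp (g ((x, snd p), fst p)))) \<in> borel_measurable (T \<Otimes>\<^sub>M R)"
      using xS by measurable
    have sYN: "sets (PY \<Otimes>\<^sub>M PN) = sets (T \<Otimes>\<^sub>M R)" by (intro sets_pair_measure_cong sPY sPN)
    have m2: "case_prod (\<lambda>y v. ennreal (exp (g ((x, v), y)))) \<in> borel_measurable (PY \<Otimes>\<^sub>M PN)"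
      using m1 unfolding measurable_cong_sets[OF sYN refl] by (simp add: case_prod_beta')
    show "(\<integral>\<^sup>+y. \<integral>\<^sup>+ v. ennreal (exp (g ((x, v), y))) \<partial>PN \<partial>PY)
      = (\<integral>\<^sup>+v. \<integral>\<^sup>+ y. ennreal (exp (g ((x, v), y))) \<partial>PY \<partial>PN)"
      by (rule YN.Fubini'[OF m2, symmetric])
  qed
  have gP3: "(\<lambda>p. ennreal (exp (g p))) \<in> borel_measurable ((PX \<Otimes>\<^sub>M PN) \<Otimes>\<^sub>M PY)"
  proof -
    have "(\<lambda>p. ennreal (exp (g p))) \<in> borel_measurable ((S \<Otimes>\<^sub>M R) \<Otimes>\<^sub>M T)" by measurable
    then show ?thesis unfolding measurable_cong_sets[OF sP3[unfolded P3_def] refl] .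
  qed
  have step6: "(\<integral>\<^sup>+x. \<integral>\<^sup>+v. \<integral>\<^sup>+ y. ennreal (exp (g ((x, v), y))) \<partial>PY \<partial>PN \<partial>PX)
      = (\<integral>\<^sup>+p. ennreal (exp (g p)) \<partial>P3)"
  proof -
    have m: "(\<lambda>xv. \<integral>\<^sup>+ y. ennreal (exp (g (xv, y))) \<partial>PY) \<in> borel_measurable (PX \<Otimes>\<^sub>M PN)"
      by (rule PY.borel_measurable_nn_integral_fst[OF gP3])
    have "(\<integral>\<^sup>+x. \<integral>\<^sup>+v. \<integral>\<^sup>+ y. ennreal (exp (g ((x, v), y))) \<partial>PY \<partial>PN \<partial>PX)
       = (\<integral>\<^sup>+xv. \<integral>\<^sup>+ y. ennreal (exp (g (xv, y))) \<partial>PY \<partial>(PX \<Otimes>\<^sub>M PN))"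
      using PN.nn_integral_fst[OF m] by simp
    also have "\<dots> = (\<integral>\<^sup>+p. ennreal (exp (g p)) \<partial>P3)"
      unfolding P3_def by (rule PY.nn_integral_fst[OF gP3])
    finally show ?thesis .
  qed
  have ei': "integrable P3 (\<lambda>p. exp (g p))" using ei unfolding P3_def PX_def PY_def PN_def .
  have step7: "(\<integral>\<^sup>+p. ennreal (exp (g p)) \<partial>P3) = ennreal Zc"
    unfolding Zc_def by (rule nn_integral_eq_integral[OF ei']) simp
  have bound: "(\<integral>\<^sup>+\<omega>. h ((X \<omega>, Y \<omega>), V \<omega>) \<partial>M) \<le> ennreal Zc"
    using step1 step2 step3 step4 step5 step6 step7 by simp
  have Zc_nn: "0 \<le> Zc" unfolding Zc_def by (intro integral_nonneg_AE) auto
  have Zc_pos: "0 < Zc"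
  proof (rule ccontr)
    assume "\<not> 0 < Zc"
    then have "Zc = 0" using Zc_nn by simp
    then have "AE p in P3. exp (g p) = 0"
      unfolding Zc_def by (subst (asm) integral_nonneg_eq_0_iff_AE[OF ei']) auto
    then have "AE p in P3. False" by simp
    then show False by (simp add: AE_False)
  qed
  define r where "r = (\<lambda>\<omega>. exp (g ((X \<omega>, V \<omega>), Y \<omega>)) / enn2real (D (X \<omega>, Y \<omega>)))"
  define L where "L = (\<lambda>\<omega>. ln (enn2real (D (X \<omega>, Y \<omega>))))"
  define G where "G = (\<lambda>\<omega>. g ((X \<omega>, V \<omega>), Y \<omega>))"
  have r_m[measurable]: "r \<in> borel_measurable M" unfolding r_def by measurable
  have r_nn: "0 \<le> r \<omega>" for \<omega> unfolding r_def by simp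
  have AE_r: "AE \<omega> in M. ennreal (r \<omega>) = h ((X \<omega>, Y \<omega>), V \<omega>)"
    using AE_M
  proof eventually_elim
    case (elim \<omega>)
    then obtain d where d: "D (X \<omega>, Y \<omega>) = ennreal d" "0 < d"
      by (cases "D (X \<omega>, Y \<omega>)") auto
    show ?case unfolding r_def h_def e_def using d by (simp add: divide_ennreal)
  qed
  have nn_r: "(\<integral>\<^sup>+\<omega>. ennreal (r \<omega>) \<partial>M) \<le> ennreal Zc"
    using bound by (subst nn_integral_cong_AE[OF AE_r]) auto
  have r_int: "integrable M r"
    by (rule integrableI_nonneg) (use nn_r r_nn in \<open>auto simp: top_unique intro: le_less_trans\<close>)
  have r_le: "(\<integral>\<omega>. r \<omega> \<partial>M) \<le> Zc"
  proof -
    have "(\<integral>\<omega>. r \<omega> \<partial>M) = enn2real (\<integral>\<^sup>+\<omega>. ennreal (r \<omega>) \<partial>M)"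
      by (rule integral_eq_nn_integral) (auto simp: r_nn)
    also have "\<dots> \<le> enn2real (ennreal Zc)"
      using nn_r by (intro enn2real_mono) auto
    finally show ?thesis using Zc_nn by simp
  qed
  have ed: "entropy_density (exp 1) Q J = (\<lambda>x. ln (enn2real (D x)))"
    by (simp add: entropy_density_def D_def log_def fun_eq_iff)
  have ent': "integrable J (\<lambda>x. ln (enn2real (D x)))"
    using ent unfolding J_def[symmetric] PX_def[symmetric] PY_def[symmetric] Q_def[symmetric] ed .
  have L_int: "integrable M L"
    using ent' unfolding J_def L_def by (subst (asm) integrable_distr_eq) auto
  have MI: "mutual_information (exp 1) S T X Y = (\<integral>\<omega>. L \<omega> \<partial>M)"
  proof -
    have "mutual_information (exp 1) S T X Y = (\<integral>x. ln (enn2real (D x)) \<partial>J)"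
      unfolding mutual_information_def KL_divergence_def J_def[symmetric] PX_def[symmetric]
        PY_def[symmetric] Q_def[symmetric] ed ..
    also have "\<dots> = (\<integral>\<omega>. L \<omega> \<partial>M)"
      unfolding J_def L_def by (rule integral_distr) auto
    finally show ?thesis .
  qed
  have G_int: "integrable M G" using gi unfolding G_def .
  have pw: "AE \<omega> in M. G \<omega> - L \<omega> \<le> ln Zc + r \<omega> / Zc - 1"
    using AE_M
  proof eventually_elim
    case (elim \<omega>)
    define d where "d = enn2real (D (X \<omega>, Y \<omega>))"
    have dpos: "0 < d" using elim unfolding d_def by (cases "D (X \<omega>, Y \<omega>)") auto
    define u where "u = G \<omega> - ln d - ln Zc"
    have "exp u = exp (G \<omega>) / (d * Zc)"
      unfolding u_def using dpos Zc_pos by (simp add: exp_diff)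
    also have "\<dots> = r \<omega> / Zc" unfolding r_def d_def G_def by simp
    finally have "1 + u \<le> r \<omega> / Zc" using exp_ge_add_one_self[of u] by simp
    then show ?case unfolding u_def L_def d_def by simp
  qed
  have "(\<integral>\<omega>. G \<omega> - L \<omega> \<partial>M) \<le> (\<integral>\<omega>. ln Zc + r \<omega> / Zc - 1 \<partial>M)"
    by (rule integral_mono_AE) (use G_int L_int r_int pw in auto)
  also have "\<dots> = ln Zc + (\<integral>\<omega>. r \<omega> \<partial>M) / Zc - 1"
    using r_int by (simp add: prob_space)
  also have "\<dots> \<le> ln Zc" using r_le Zc_pos by (simp add: divide_le_eq)
  finally have "(\<integral>\<omega>. G \<omega> \<partial>M) - (\<integral>\<omega>. L \<omega> \<partial>M) \<le> ln Zc"
    using G_int L_int by simp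
  then show ?thesis
    unfolding MI[symmetric] G_def Zc_def P3_def PX_def PY_def PN_def by simp
qed

theorem theorem1:
  fixes M :: "'o measure"
    and m :: nat and n :: "nat \<Rightarrow> nat"
    and t_agg :: nat and t_c :: "nat \<Rightarrow> nat" and eps_c :: "nat \<Rightarrow> real"
    and Hyp :: "'w::euclidean_space set"
    and loss :: "'w \<Rightarrow> 'z \<Rightarrow> real"
    and Mz :: "'z measure" and \<mu> :: "nat \<Rightarrow> 'z measure"
    and Wloc :: "nat \<Rightarrow> nat \<Rightarrow> 'o \<Rightarrow> 'w"
    and Nn :: "nat \<Rightarrow> 'o \<Rightarrow> 'w" and s :: "nat \<Rightarrow> real"
    and Z :: "nat \<Rightarrow> nat \<Rightarrow> nat \<Rightarrow> 'o \<Rightarrow> 'z"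
    and W N wstar :: "'o \<Rightarrow> 'w"
    and \<psi> :: "nat \<Rightarrow> real \<Rightarrow> real" and bminus bplus :: "nat \<Rightarrow> ereal"
  assumes M: "prob_space M"
    and m_pos: "0 < m" and n_pos: "\<forall>i<m. 0 < n i"
    and times: "\<forall>i<m. 1 \<le> t_c i \<and> t_c i \<le> t_agg"
    and privacy: "\<forall>i<m. 0 \<le> eps_c i"
    and W_def: "W = (\<lambda>\<omega>. (1 / real m) *\<^sub>R (\<Sum>i<m. Wloc i (t_c i) \<omega>))"
    and N_def: "N = (\<lambda>\<omega>. (1 / real m) *\<^sub>R (\<Sum>i<m. Nn i \<omega>))"
    and laplace: "\<forall>i<m. 0 < s i \<and>
        distributed M lborel (Nn i) (\<lambda>x. ennreal (laplace_vec_density (s i) x))"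
    and noise_indep: "prob_space.indep_vars M (\<lambda>_. borel) Nn {..<m}"
    and meas: "\<forall>i t. Wloc i t \<in> borel_measurable M"
        "\<forall>i t j. Z i t j \<in> measurable M Mz"
    and noise_indep_rest: "prob_space.indep_set M
        (sigma_sets (space M) (\<Union>i<m. {Nn i -` A \<inter> space M | A. A \<in> sets borel}))
        (sigma_sets (space M)
          ((\<Union>i t. {Wloc i t -` A \<inter> space M | A. A \<in> sets borel}) \<union>
           (\<Union>i t j. {Z i t j -` A \<inter> space M | A. A \<in> sets Mz})))"
    and W_in: "\<forall>\<omega>\<in>space M. W \<omega> \<in> Hyp"
    and loss_meas: "(\<lambda>(w, z). loss w z) \<in> borel_measurable (borel \<Otimes>\<^sub>M Mz)"
    and target: "\<forall>i<m. prob_space (\<mu> i) \<and> sets (\<mu> i) = sets Mz \<and>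
        (\<forall>j<n i. distr M Mz (Z i t_agg j) = \<mu> i)"
    and pop_integrable: "\<forall>i<m. \<forall>w\<in>Hyp. integrable (\<mu> i) (loss w)"
    and wstar_erm: "\<forall>\<omega>\<in>space M. wstar \<omega> \<in> Hyp \<and>
        (\<forall>w\<in>Hyp. global_emp_loss loss m n (\<lambda>i j. Z i t_agg j \<omega>) (wstar \<omega>)
                 \<le> global_emp_loss loss m n (\<lambda>i j. Z i t_agg j \<omega>) w)"
    and integrable_emp: "\<forall>i<m. \<forall>j<n i.
        integrable M (\<lambda>\<omega>. loss (W \<omega> + N \<omega>) (Z i t_agg j \<omega>)) \<and>
        integrable M (\<lambda>\<omega>. loss (wstar \<omega>) (Z i t_agg j \<omega>))"
    and integrable_pop: "integrable M (\<lambda>\<omega>. avg_pop_loss loss m n \<mu> (W \<omega> + N \<omega>))"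
        "integrable M (\<lambda>\<omega>. avg_pop_loss loss m n \<mu> (wstar \<omega>))"
    and cgf_bound: "\<forall>i<m. bminus i < 0 \<and> 0 < bplus i \<and>
        integrable ((distr M borel W \<Otimes>\<^sub>M distr M borel N) \<Otimes>\<^sub>M \<mu> i)
          (\<lambda>((w, v), z). loss (w + v) z) \<and>
        (\<forall>lam. bminus i < ereal lam \<and> ereal lam < bplus i \<longrightarrow>
          (let P = (distr M borel W \<Otimes>\<^sub>M distr M borel N) \<Otimes>\<^sub>M \<mu> i;
               c = (\<integral>((w, v), z). loss (w + v) z \<partial>P);
               f = (\<lambda>((w, v), z). loss (w + v) z - c)
           in integrable P (\<lambda>x. exp (lam * f x)) \<and> cgf P f lam \<le> \<psi> i lam))"
    and MI_finite: "\<forall>i<m. \<forall>j<n i.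
        absolutely_continuous (distr M borel W \<Otimes>\<^sub>M distr M Mz (Z i t_agg j))
          (distr M (borel \<Otimes>\<^sub>M Mz) (\<lambda>\<omega>. (W \<omega>, Z i t_agg j \<omega>))) \<and>
        integrable (distr M (borel \<Otimes>\<^sub>M Mz) (\<lambda>\<omega>. (W \<omega>, Z i t_agg j \<omega>)))
          (entropy_density (exp 1) (distr M borel W \<Otimes>\<^sub>M distr M Mz (Z i t_agg j))
             (distr M (borel \<Otimes>\<^sub>M Mz) (\<lambda>\<omega>. (W \<omega>, Z i t_agg j \<omega>))))"
  shows "(\<integral>\<omega>. global_emp_loss loss m n (\<lambda>i j. Z i t_agg j \<omega>) (W \<omega> + N \<omega>)
              - global_emp_loss loss m n (\<lambda>i j. Z i t_agg j \<omega>) (wstar \<omega>) \<partial>M)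
         \<le> (\<Sum>i<m. client_weight m n i * (1 / real (n i)) *
               (\<Sum>j<n i. psi_star_inv (\<psi> i) (bplus i)
                  (prob_space.mutual_information M (exp 1) borel Mz W (Z i t_agg j))))
           + (\<integral>\<omega>. avg_pop_loss loss m n \<mu> (wstar \<omega>) \<partial>M)
           - (\<integral>\<omega>. global_emp_loss loss m n (\<lambda>i j. Z i t_agg j \<omega>) (wstar \<omega>) \<partial>M)
           + (\<integral>\<omega>. avg_pop_loss loss m n \<mu> (W \<omega> + N \<omega>) - avg_pop_loss loss m n \<mu> (wstar \<omega>) \<partial>M)
       \<and> ((\<forall>w\<in>Hyp. \<forall>\<omega>\<in>space M. w + N \<omega> \<in> Hyp) \<longrightarrow>
           ereal (\<integral>\<omega>. avg_pop_loss loss m n \<mu> (W \<omega> + N \<omega>) - avg_pop_loss loss m n \<mu> (wstar \<omega>) \<partial>M)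
           \<le> (SUP w\<in>Hyp. ereal (avg_pop_loss loss m n \<mu> w))
              - ereal (\<integral>\<omega>. avg_pop_loss loss m n \<mu> (wstar \<omega>) \<partial>M))"
proof -
  interpret prob_space M by (rule M)
  have Wl[measurable]: "\<And>i t. Wloc i t \<in> borel_measurable M" using meas(1) by auto
  have Zm[measurable]: "\<And>i t j. Z i t j \<in> measurable M Mz" using meas(2) by auto
  have Nnm: "Nn i \<in> borel_measurable M" if "i < m" for i
    using laplace that unfolding distributed_def by auto
  have Wm[measurable]: "W \<in> borel_measurable M" unfolding W_def by measurable
  have Nm[measurable]: "N \<in> borel_measurable M" unfolding N_def
    by (intro borel_measurable_scaleR borel_measurable_const borel_measurable_sum Nnm) auto
  have lossc: "(\<lambda>x. loss (a x) (b x)) \<in> borel_measurable Mx"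
    if "a \<in> borel_measurable Mx" "b \<in> measurable Mx Mz" for a b and Mx :: "'q measure"
    using measurable_compose[OF measurable_Pair[OF that] loss_meas] by simp
  define GA where "GA = (\<Union>i<m. {Nn i -` A \<inter> space M | A. A \<in> sets borel})"
  define GB where "GB = ((\<Union>i t. {Wloc i t -` A \<inter> space M | A. A \<in> sets borel}) \<union>
           (\<Union>i t j. {Z i t j -` A \<inter> space M | A. A \<in> sets Mz}))"
  have GA_P: "GA \<subseteq> Pow (space M)" unfolding GA_def by auto
  have GB_P: "GB \<subseteq> Pow (space M)" unfolding GB_def by auto
  have NA: "N \<in> borel_measurable (sigma (space M) GA)"
  proof -
    have "Nn i \<in> borel_measurable (sigma (space M) GA)" if "i < m" for i
      by (rule measurable_sigma_gen[OF GA_P]) (use that in \<open>auto simp: GA_def\<close>)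
    then show ?thesis unfolding N_def
      by (intro borel_measurable_scaleR borel_measurable_const borel_measurable_sum) auto
  qed
  have WB: "W \<in> borel_measurable (sigma (space M) GB)"
  proof -
    have "Wloc i t \<in> borel_measurable (sigma (space M) GB)" for i t
      by (rule measurable_sigma_gen[OF GB_P]) (auto simp: GB_def)
    then show ?thesis unfolding W_def by measurable
  qed
  have ZB: "Z i t j \<in> measurable (sigma (space M) GB) Mz" for i t j
    by (rule measurable_sigma_gen[OF GB_P]) (use measurable_space[OF Zm] in \<open>auto simp: GB_def\<close>)
  have ind': "indep_set (sigma_sets (space M) GA) (sigma_sets (space M) GB)"
    using noise_indep_rest unfolding GA_def GB_def .
  have NA': "N -` C \<inter> space M \<in> sigma_sets (space M) GA" if "C \<in> sets borel" for C
    using measurable_sets[OF NA that] by (simp add: space_measure_of_conv sets_measure_of[OF GA_P])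
  have indWN: "distr M borel W \<Otimes>\<^sub>M distr M borel N = distr M (borel \<Otimes>\<^sub>M borel) (\<lambda>x. (W x, N x))"
  proof (rule indep_distr[OF M Wm Nm ind'])
    fix C :: "'w set" assume "C \<in> sets borel"
    then show "W -` C \<inter> space M \<in> sigma_sets (space M) GB"
      using measurable_sets[OF WB] by (simp add: space_measure_of_conv sets_measure_of[OF GB_P])
  qed (rule NA')
  have indWZN: "distr M (borel \<Otimes>\<^sub>M Mz) (\<lambda>x. (W x, Z i t_agg j x)) \<Otimes>\<^sub>M distr M borel N
      = distr M ((borel \<Otimes>\<^sub>M Mz) \<Otimes>\<^sub>M borel) (\<lambda>x. ((W x, Z i t_agg j x), N x))" for i j
  proof (rule indep_distr[OF M _ Nm ind'])
    show "(\<lambda>x. (W x, Z i t_agg j x)) \<in> measurable M (borel \<Otimes>\<^sub>M Mz)" by measurable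
    have WZB: "(\<lambda>x. (W x, Z i t_agg j x)) \<in> measurable (sigma (space M) GB) (borel \<Otimes>\<^sub>M Mz)"
      using WB ZB by measurable
    fix C :: "('w \<times> 'z) set" assume "C \<in> sets (borel \<Otimes>\<^sub>M Mz)"
    then show "(\<lambda>x. (W x, Z i t_agg j x)) -` C \<inter> space M \<in> sigma_sets (space M) GB"
      using measurable_sets[OF WZB]
      by (simp add: space_measure_of_conv sets_measure_of[OF GB_P])
  qed (rule NA')
  define c where "c i = (\<integral>((w, v), z). loss (w + v) z \<partial>((distr M borel W \<Otimes>\<^sub>M distr M borel N) \<Otimes>\<^sub>M \<mu> i))" for i
  define PS where "PS i j = psi_star_inv (\<psi> i) (bplus i)
                  (prob_space.mutual_information M (exp 1) borel Mz W (Z i t_agg j))" for i j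
  define EL where "EL i j = (\<integral>\<omega>. loss (W \<omega> + N \<omega>) (Z i t_agg j \<omega>) \<partial>M)" for i j
  have key: "EL i j \<le> PS i j + c i" if i: "i < m" and j: "j < n i" for i j
  proof -
    define P where "P = (distr M borel W \<Otimes>\<^sub>M distr M borel N) \<Otimes>\<^sub>M \<mu> i"
    define f where "f = (\<lambda>((w, v), z). loss (w + v) z - c i)"
    define MI where "MI = prob_space.mutual_information M (exp 1) borel Mz W (Z i t_agg j)"
    have bm: "bminus i < 0" and bp: "0 < bplus i" using cgf_bound i by auto
    have cg: "integrable P (\<lambda>x. exp (lam * f x)) \<and> cgf P f lam \<le> \<psi> i lam"
      if "bminus i < ereal lam" "ereal lam < bplus i" for lam
    proof -
      have "(let P = (distr M borel W \<Otimes>\<^sub>M distr M borel N) \<Otimes>\<^sub>M \<mu> i;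
               c = (\<integral>((w, v), z). loss (w + v) z \<partial>P);
               f = (\<lambda>((w, v), z). loss (w + v) z - c)
           in integrable P (\<lambda>x. exp (lam * f x)) \<and> cgf P f lam \<le> \<psi> i lam)"
        using cgf_bound i that by blast
      then show ?thesis unfolding Let_def P_def f_def c_def .
    qed
    have distrZ: "distr M Mz (Z i t_agg j) = \<mu> i" using target i j by auto
    have sP: "sets P = sets ((borel \<Otimes>\<^sub>M borel) \<Otimes>\<^sub>M Mz)"
      unfolding P_def using target i by (intro sets_pair_measure_cong) auto
    have f_alt: "f = (\<lambda>p. loss (fst (fst p) + snd (fst p)) (snd p) - c i)"
      unfolding f_def by (auto simp: fun_eq_iff split: prod.splits)
    have fm: "f \<in> borel_measurable ((borel \<Otimes>\<^sub>M borel) \<Otimes>\<^sub>M Mz)"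
      unfolding f_alt by (intro borel_measurable_diff borel_measurable_const lossc) measurable
    have each: "EL i j - c i \<le> (MI + \<psi> i lam) / lam" if lam: "0 < lam" "ereal lam < bplus i" for lam
    proof -
      have lb: "bminus i < ereal lam" using bm lam by (metis ereal_less(2) less_trans zero_ereal_def)
      note cgl = cg[OF lb lam(2)]
      define g where "g = (\<lambda>x. lam * f x)"
      have gm: "g \<in> borel_measurable ((borel \<Otimes>\<^sub>M borel) \<Otimes>\<^sub>M Mz)" unfolding g_def using fm by measurable
      have gW: "g ((W \<omega>, N \<omega>), Z i t_agg j \<omega>) = lam * (loss (W \<omega> + N \<omega>) (Z i t_agg j \<omega>) - c i)" for \<omega>
        unfolding g_def f_def by simp
      have li: "integrable M (\<lambda>\<omega>. loss (W \<omega> + N \<omega>) (Z i t_agg j \<omega>))" using integrable_emp i j by auto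
      have gi: "integrable M (\<lambda>\<omega>. g ((W \<omega>, N \<omega>), Z i t_agg j \<omega>))"
        unfolding gW using li by auto
      have ei: "integrable ((distr M borel W \<Otimes>\<^sub>M distr M borel N) \<Otimes>\<^sub>M distr M Mz (Z i t_agg j)) (\<lambda>p. exp (g p))"
        using cgl unfolding distrZ g_def P_def by simp
      have mi: "absolutely_continuous (distr M borel W \<Otimes>\<^sub>M distr M Mz (Z i t_agg j))
          (distr M (borel \<Otimes>\<^sub>M Mz) (\<lambda>\<omega>. (W \<omega>, Z i t_agg j \<omega>))) \<and>
        integrable (distr M (borel \<Otimes>\<^sub>M Mz) (\<lambda>\<omega>. (W \<omega>, Z i t_agg j \<omega>)))
          (entropy_density (exp 1) (distr M borel W \<Otimes>\<^sub>M distr M Mz (Z i t_agg j))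
             (distr M (borel \<Otimes>\<^sub>M Mz) (\<lambda>\<omega>. (W \<omega>, Z i t_agg j \<omega>))))"
        using MI_finite i j by blast
      note DV = DV_indep[OF M Wm Zm[of i t_agg j] Nm indWZN[of i j] conjunct1[OF mi] conjunct2[OF mi] gm gi ei]
      have "(\<integral>\<omega>. g ((W \<omega>, N \<omega>), Z i t_agg j \<omega>) \<partial>M) \<le> MI + ln (\<integral>p. exp (g p) \<partial>P)"
        using DV unfolding MI_def P_def distrZ by simp
      also have "ln (\<integral>p. exp (g p) \<partial>P) = cgf P f lam" unfolding cgf_def g_def ..
      also have "(\<integral>\<omega>. g ((W \<omega>, N \<omega>), Z i t_agg j \<omega>) \<partial>M) = lam * (EL i j - c i)"
        unfolding gW EL_def using li by (simp add: prob_space)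
      finally have "lam * (EL i j - c i) \<le> MI + \<psi> i lam" using cgl by simp
      then show ?thesis using lam by (simp add: pos_le_divide_eq mult.commute)
    qed
    have ne: "{lam. 0 < lam \<and> ereal lam < bplus i} \<noteq> {}"
      using ereal_dense2[OF bp] by (auto simp: zero_ereal_def)
    have "EL i j - c i \<le> PS i j"
      unfolding PS_def psi_star_inv_def MI_def[symmetric]
      by (rule cINF_greatest[OF ne]) (use each in auto)
    then show ?thesis by simp
  qed
  have pop: "integrable M (\<lambda>\<omega>. pop_risk loss (\<mu> i) (W \<omega> + N \<omega>)) \<and>
      (\<integral>\<omega>. pop_risk loss (\<mu> i) (W \<omega> + N \<omega>) \<partial>M) = c i" if i: "i < m" for i
  proof -
    interpret PW: prob_space "distr M borel W" by (rule prob_space_distr) simp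
    interpret PN: prob_space "distr M borel N" by (rule prob_space_distr) simp
    interpret Mu: prob_space "\<mu> i" using target i by auto
    interpret WN: pair_prob_space "distr M borel W" "distr M borel N" ..
    interpret WNM: pair_prob_space "distr M borel W \<Otimes>\<^sub>M distr M borel N" "\<mu> i"
      by (intro pair_prob_space.intro prob_space_pair) unfold_locales
    define F where "F = (\<lambda>((w, v), z). loss (w + v) z)"
    have intP: "integrable ((distr M borel W \<Otimes>\<^sub>M distr M borel N) \<Otimes>\<^sub>M \<mu> i) F"
      using cgf_bound i unfolding F_def by blast
    define pr where "pr = (\<lambda>x. pop_risk loss (\<mu> i) (fst x + snd x))"
    have prF: "(\<lambda>x. \<integral>y. F (x, y) \<partial>\<mu> i) = pr"
      unfolding pr_def pop_risk_def F_def by (auto simp: fun_eq_iff split: prod.split)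
    have i1: "integrable (distr M borel W \<Otimes>\<^sub>M distr M borel N) pr"
      using WNM.integrable_fst'[OF intP] unfolding prF .
    have e1: "(\<integral>x. pr x \<partial>(distr M borel W \<Otimes>\<^sub>M distr M borel N)) = c i"
    proof -
      have "(\<integral>x. pr x \<partial>(distr M borel W \<Otimes>\<^sub>M distr M borel N)) = integral\<^sup>L ((distr M borel W \<Otimes>\<^sub>M distr M borel N) \<Otimes>\<^sub>M \<mu> i) F"
        using WNM.integral_fst'[OF intP] unfolding prF .
      then show ?thesis unfolding c_def F_def .
    qed
    have i2: "integrable (distr M (borel \<Otimes>\<^sub>M borel) (\<lambda>x. (W x, N x))) pr"
      using i1 unfolding indWN .
    have prm: "pr \<in> borel_measurable (borel \<Otimes>\<^sub>M borel)"
      using borel_measurable_integrable[OF i2] by simp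
    have "integrable M (\<lambda>\<omega>. pr (W \<omega>, N \<omega>))"
      using i2 by (subst (asm) integrable_distr_eq[OF _ prm]) auto
    moreover have "(\<integral>\<omega>. pr (W \<omega>, N \<omega>) \<partial>M) = c i"
      using e1 unfolding indWN by (subst (asm) integral_distr[OF _ prm]) auto
    ultimately show ?thesis unfolding pr_def by simp
  qed
  define p where "p i = client_weight m n i" for i
  have p_nn: "0 \<le> p i" for i unfolding p_def client_weight_def by (simp add: sum_nonneg)
  have glob_eq: "global_emp_loss loss m n (\<lambda>i j. Z i t_agg j \<omega>) w
      = (\<Sum>i<m. p i * (1 / real (n i) * (\<Sum>j<n i. loss w (Z i t_agg j \<omega>))))" for \<omega> w
    by (simp add: global_emp_loss_def local_emp_loss_def p_def)
  have avg_eq: "avg_pop_loss loss m n \<mu> w = (\<Sum>i<m. p i * pop_risk loss (\<mu> i) w)" for w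
    by (simp add: avg_pop_loss_def p_def)
  have liWN: "integrable M (\<lambda>\<omega>. loss (W \<omega> + N \<omega>) (Z i t_agg j \<omega>))" if "i \<in> {..<m}" "j \<in> {..<n i}" for i j
    using integrable_emp that by auto
  have liS: "integrable M (\<lambda>\<omega>. loss (wstar \<omega>) (Z i t_agg j \<omega>))" if "i \<in> {..<m}" "j \<in> {..<n i}" for i j
    using integrable_emp that by auto
  have igWN: "integrable M (\<lambda>\<omega>. global_emp_loss loss m n (\<lambda>i j. Z i t_agg j \<omega>) (W \<omega> + N \<omega>))"
    unfolding glob_eq
  proof (rule Bochner_Integration.integrable_sum)
    fix i assume i: "i \<in> {..<m}"
    have "integrable M (\<lambda>\<omega>. \<Sum>j<n i. loss (W \<omega> + N \<omega>) (Z i t_agg j \<omega>))"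
      by (rule Bochner_Integration.integrable_sum, rule liWN[OF i])
    then show "integrable M (\<lambda>\<omega>. p i * (1 / real (n i) * (\<Sum>j<n i. loss (W \<omega> + N \<omega>) (Z i t_agg j \<omega>))))"
      by (intro integrable_mult_right)
  qed
  have igS: "integrable M (\<lambda>\<omega>. global_emp_loss loss m n (\<lambda>i j. Z i t_agg j \<omega>) (wstar \<omega>))"
    unfolding glob_eq
  proof (rule Bochner_Integration.integrable_sum)
    fix i assume i: "i \<in> {..<m}"
    have "integrable M (\<lambda>\<omega>. \<Sum>j<n i. loss (wstar \<omega>) (Z i t_agg j \<omega>))"
      by (rule Bochner_Integration.integrable_sum, rule liS[OF i])
    then show "integrable M (\<lambda>\<omega>. p i * (1 / real (n i) * (\<Sum>j<n i. loss (wstar \<omega>) (Z i t_agg j \<omega>))))"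
      by (intro integrable_mult_right)
  qed
  have EgWN: "(\<integral>\<omega>. global_emp_loss loss m n (\<lambda>i j. Z i t_agg j \<omega>) (W \<omega> + N \<omega>) \<partial>M)
      = (\<Sum>i<m. p i * (1 / real (n i) * (\<Sum>j<n i. EL i j)))"
  proof -
    have "integrable M (\<lambda>\<omega>. \<Sum>j<n i. loss (W \<omega> + N \<omega>) (Z i t_agg j \<omega>))" if i: "i \<in> {..<m}" for i
      by (rule Bochner_Integration.integrable_sum, rule liWN[OF i])
    then show ?thesis unfolding glob_eq EL_def
      by (subst Bochner_Integration.integral_sum) (auto intro!: integrable_mult_right simp: Bochner_Integration.integral_sum liWN)
  qed
  have EaWN: "(\<integral>\<omega>. avg_pop_loss loss m n \<mu> (W \<omega> + N \<omega>) \<partial>M) = (\<Sum>i<m. p i * c i)"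
    unfolding avg_eq using pop by (subst Bochner_Integration.integral_sum) auto
  have ineq: "(\<Sum>i<m. p i * (1 / real (n i) * (\<Sum>j<n i. EL i j)))
      \<le> (\<Sum>i<m. p i * (1 / real (n i)) * (\<Sum>j<n i. PS i j)) + (\<Sum>i<m. p i * c i)"
  proof -
    have "p i * (1 / real (n i) * (\<Sum>j<n i. EL i j)) \<le> p i * (1 / real (n i)) * (\<Sum>j<n i. PS i j) + p i * c i"
      if i: "i < m" for i
    proof -
      have npos: "0 < real (n i)" using n_pos i by auto
      have "(\<Sum>j<n i. EL i j) \<le> (\<Sum>j<n i. PS i j + c i)" using key i by (intro sum_mono) auto
      also have "\<dots> = (\<Sum>j<n i. PS i j) + real (n i) * c i" by (simp add: sum.distrib)
      finally have "1 / real (n i) * (\<Sum>j<n i. EL i j) \<le> 1 / real (n i) * ((\<Sum>j<n i. PS i j) + real (n i) * c i)"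
        using npos by (intro mult_left_mono) auto
      also have "\<dots> = 1 / real (n i) * (\<Sum>j<n i. PS i j) + c i" using npos by (simp add: field_simps)
      finally have X: "1 / real (n i) * (\<Sum>j<n i. EL i j) \<le> 1 / real (n i) * (\<Sum>j<n i. PS i j) + c i" .
      have "p i * (1 / real (n i) * (\<Sum>j<n i. EL i j)) \<le> p i * (1 / real (n i) * (\<Sum>j<n i. PS i j) + c i)"
        using mult_left_mono[OF X p_nn[of i]] .
      then show ?thesis by (simp only: distrib_left mult.assoc)
    qed
    then have "(\<Sum>i<m. p i * (1 / real (n i) * (\<Sum>j<n i. EL i j)))
      \<le> (\<Sum>i<m. p i * (1 / real (n i)) * (\<Sum>j<n i. PS i j) + p i * c i)" by (intro sum_mono) auto
    then show ?thesis by (simp add: sum.distrib)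
  qed
  have part1: "(\<integral>\<omega>. global_emp_loss loss m n (\<lambda>i j. Z i t_agg j \<omega>) (W \<omega> + N \<omega>)
              - global_emp_loss loss m n (\<lambda>i j. Z i t_agg j \<omega>) (wstar \<omega>) \<partial>M)
         \<le> (\<Sum>i<m. client_weight m n i * (1 / real (n i)) *
               (\<Sum>j<n i. psi_star_inv (\<psi> i) (bplus i)
                  (prob_space.mutual_information M (exp 1) borel Mz W (Z i t_agg j))))
           + (\<integral>\<omega>. avg_pop_loss loss m n \<mu> (wstar \<omega>) \<partial>M)
           - (\<integral>\<omega>. global_emp_loss loss m n (\<lambda>i j. Z i t_agg j \<omega>) (wstar \<omega>) \<partial>M)
           + (\<integral>\<omega>. avg_pop_loss loss m n \<mu> (W \<omega> + N \<omega>) - avg_pop_loss loss m n \<mu> (wstar \<omega>) \<partial>M)"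
    using ineq igWN igS integrable_pop EgWN EaWN
    by (simp add: integral_diff p_def PS_def)
  have part2: "(\<forall>w\<in>Hyp. \<forall>\<omega>\<in>space M. w + N \<omega> \<in> Hyp) \<longrightarrow>
           ereal (\<integral>\<omega>. avg_pop_loss loss m n \<mu> (W \<omega> + N \<omega>) - avg_pop_loss loss m n \<mu> (wstar \<omega>) \<partial>M)
           \<le> (SUP w\<in>Hyp. ereal (avg_pop_loss loss m n \<mu> w))
              - ereal (\<integral>\<omega>. avg_pop_loss loss m n \<mu> (wstar \<omega>) \<partial>M)"
  proof
    assume H: "\<forall>w\<in>Hyp. \<forall>\<omega>\<in>space M. w + N \<omega> \<in> Hyp"
    have inH: "W \<omega> + N \<omega> \<in> Hyp" if "\<omega> \<in> space M" for \<omega> using H W_in that by blast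
    define Sp where "Sp = (SUP w\<in>Hyp. ereal (avg_pop_loss loss m n \<mu> w))"
    have le_sup: "ereal (avg_pop_loss loss m n \<mu> (W \<omega> + N \<omega>)) \<le> Sp" if "\<omega> \<in> space M" for \<omega>
      unfolding Sp_def by (rule SUP_upper[OF inH[OF that]])
    have diff: "(\<integral>\<omega>. avg_pop_loss loss m n \<mu> (W \<omega> + N \<omega>) - avg_pop_loss loss m n \<mu> (wstar \<omega>) \<partial>M)
        = (\<integral>\<omega>. avg_pop_loss loss m n \<mu> (W \<omega> + N \<omega>) \<partial>M) - (\<integral>\<omega>. avg_pop_loss loss m n \<mu> (wstar \<omega>) \<partial>M)"
      by (rule Bochner_Integration.integral_diff[OF integrable_pop])
    obtain \<omega>0 where \<omega>0: "\<omega>0 \<in> space M" using not_empty by blast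
    show "ereal (\<integral>\<omega>. avg_pop_loss loss m n \<mu> (W \<omega> + N \<omega>) - avg_pop_loss loss m n \<mu> (wstar \<omega>) \<partial>M)
           \<le> Sp - ereal (\<integral>\<omega>. avg_pop_loss loss m n \<mu> (wstar \<omega>) \<partial>M)"
    proof (cases Sp)
      case (real sv)
      have "avg_pop_loss loss m n \<mu> (W \<omega> + N \<omega>) \<le> sv" if "\<omega> \<in> space M" for \<omega>
        using le_sup[OF that] real by simp
      then have "(\<integral>\<omega>. avg_pop_loss loss m n \<mu> (W \<omega> + N \<omega>) \<partial>M) \<le> (\<integral>\<omega>. sv \<partial>M)"
        by (intro integral_mono integrable_pop) auto
      then have "(\<integral>\<omega>. avg_pop_loss loss m n \<mu> (W \<omega> + N \<omega>) \<partial>M) \<le> sv" by (simp add: prob_space)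
      then show ?thesis unfolding diff real by simp
    next
      case PInf
      then show ?thesis by simp
    next
      case MInf
      then show ?thesis using le_sup[OF \<omega>0] by simp
    qed
  qed
  show ?thesis using part1 part2 by blast
qed

end
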